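(* Let $n\ge1$ and let $X$ be a discrete random variable with exactly $K$ mass points in $[0,1]$ ($K\ge1$). Let $P_Y$ be the output distribution of the binomial channel with $n$ trials induced by $X$, and let $P_{Y_r}$ be the Beta-binomial reference output. Then for every integer $L$ with $K<L\le \frac{n+2}{2}$, \[ \chi^2(P_Y\,\|\,P_{Y_r})\ge B_n(L):=\frac{L-K}{2L\prod_{j=1}^{2L-2}\frac{n+j}{n-j+1}}. \]
   Context: For an integer $n\ge1$, the binomial channel has input $X\in[0,1]$, output $Y\in\{0,\dots,n\}$ and transition law $P_{Y|X}(y|x)=\binom{n}{y}x^y(1-x)^{n-y}$; the output distribution induced by input $P_X$ is $P_Y(y)=\int\binom{n}{y}x^y(1-x)^{n-y}\,dP_X(x)$. The reference input is $X_r\sim\mathrm{Beta}(1/2,1/2)$ with induced Beta-binomial output $P_{Y_r}(y)=\frac{\Gamma(y+1/2)\Gamma(n-y+1/2)}{\pi\,\Gamma(y+1)\Gamma(n-y+1)}$, $y=0,\dots,n$. $\chi^2(P\|Q)=\sum_y \frac{(P(y)-Q(y))^2}{Q(y)}$. *)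

theory Defs
  imports "HOL-Analysis.Analysis" "HOL-Probability.Probability"
begin

definition binom_out :: "nat \<Rightarrow> real pmf \<Rightarrow> nat \<Rightarrow> real" where
  "binom_out n p y = (\<Sum>x\<in>set_pmf p. pmf p x * (real (n choose y) * x ^ y * (1 - x) ^ (n - y)))"

text \<open>Beta-binomial reference output (input Beta(1/2,1/2)).\<close>
definition ref_out :: "nat \<Rightarrow> nat \<Rightarrow> real" where
  "ref_out n y = Gamma (real y + 1/2) * Gamma (real n - real y + 1/2) /
      (pi * Gamma (real y + 1) * Gamma (real n - real y + 1))"

definition chi2 :: "nat \<Rightarrow> (nat \<Rightarrow> real) \<Rightarrow> (nat \<Rightarrow> real) \<Rightarrow> real" where
  "chi2 n P Q = (\<Sum>y\<le>n. (P y - Q y)^2 / Q y)"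

definition B_bound :: "nat \<Rightarrow> nat \<Rightarrow> nat \<Rightarrow> real" where
  "B_bound n K L = (real L - real K) /
     (2 * real L * (\<Prod>j=1..2*L-2. (real n + real j) / (real n - real j + 1)))"

end

theory Submission
  imports Defs
begin


definition xt :: "real \<Rightarrow> real" where "xt t = (1 - cos t) / 2"

lemma xt_range: "0 \<le> xt t" "xt t \<le> 1"
  unfolding xt_def using cos_le_one[of t] cos_ge_minus_one[of t] by auto

definition Ip :: "real poly \<Rightarrow> real" where
  "Ip p = integral {0..pi} (\<lambda>t. poly p (xt t)) / pi"

lemma cont_poly_xt: "continuous_on S (\<lambda>t. poly p (xt t))"
  unfolding xt_def by (intro continuous_intros) auto

lemma int_poly_xt: "(\<lambda>t. poly p (xt t)) integrable_on {0..pi}"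
  by (rule integrable_continuous_real) (rule cont_poly_xt)

lemma Ip_add: "Ip (p + q) = Ip p + Ip q"
  unfolding Ip_def by (simp add: integral_add[OF int_poly_xt int_poly_xt] add_divide_distrib)

lemma Ip_diff: "Ip (p - q) = Ip p - Ip q"
  unfolding Ip_def by (simp add: integral_diff[OF int_poly_xt int_poly_xt] diff_divide_distrib)

lemma Ip_smult: "Ip (smult c p) = c * Ip p"
  unfolding Ip_def by simp

lemma Ip_minus: "Ip (- p) = - Ip p"
  using Ip_smult[of "-1" p] by simp

lemma Ip_0 [simp]: "Ip 0 = 0"
  unfolding Ip_def by simp

lemma Ip_1: "Ip 1 = 1"
  unfolding Ip_def by simp

lemma Ip_const: "Ip [:c:] = c"
  unfolding Ip_def by simp

lemma Ip_sum: "Ip (\<Sum>i\<in>A. f i) = (\<Sum>i\<in>A. Ip (f i))"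
  by (induction A rule: infinite_finite_induct) (auto simp: Ip_add)

lemma Ip_nonneg: assumes "\<And>x. 0 \<le> x \<Longrightarrow> x \<le> 1 \<Longrightarrow> 0 \<le> poly p x" shows "0 \<le> Ip p"
proof -
  have "0 \<le> integral {0..pi} (\<lambda>t. poly p (xt t))"
    by (rule integral_nonneg[OF int_poly_xt]) (use assms xt_range in auto)
  then show ?thesis unfolding Ip_def by simp
qed

lemma Ip_mono: assumes "\<And>x. 0 \<le> x \<Longrightarrow> x \<le> 1 \<Longrightarrow> poly p x \<le> poly q x" shows "Ip p \<le> Ip q"
  using Ip_nonneg[of "q - p"] assms by (simp add: Ip_diff)

lemma Ip_sq_nonneg: "0 \<le> Ip (p * p)"
  by (rule Ip_nonneg) simp

lemma Ip_CS: "(Ip (p * q))^2 \<le> Ip (p * p) * Ip (q * q)"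
proof -
  define A B C where "A = Ip (p * p)" and "B = Ip (p * q)" and "C = Ip (q * q)"
  have key: "0 \<le> A + 2 * s * B + s^2 * C" for s
  proof -
    have "0 \<le> Ip ((p + smult s q) * (p + smult s q))" by (rule Ip_sq_nonneg)
    also have "(p + smult s q) * (p + smult s q) = p * p + smult (2 * s) (p * q) + smult (s^2) (q * q)"
      by (rule poly_ext) (simp add: algebra_simps power2_eq_square)
    finally show ?thesis unfolding A_def B_def C_def by (simp add: Ip_add Ip_smult)
  qed
  have C0: "0 \<le> C" unfolding C_def by (rule Ip_sq_nonneg)
  show ?thesis
  proof (cases "C = 0")
    case True
    have "B = 0"
    proof (rule ccontr)
      assume "B \<noteq> 0"
      have "0 \<le> A + 2 * (- (A + 1) / (2 * B)) * B" using key[of "- (A + 1) / (2 * B)"] True by simp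
      also have "\<dots> = -1" using \<open>B \<noteq> 0\<close> by (simp add: field_simps)
      finally show False by simp
    qed
    then show ?thesis using True unfolding A_def B_def C_def by simp
  next
    case False
    then have Cp: "C > 0" using C0 by simp
    have "0 \<le> A + 2 * (- B / C) * B + (- B / C)^2 * C" by (rule key)
    also have "\<dots> = A - B^2 / C" using Cp by (simp add: field_simps power2_eq_square)
    finally have "B^2 / C \<le> A" by simp
    then have "B^2 \<le> A * C" using Cp by (simp add: field_simps)
    then show ?thesis unfolding A_def B_def C_def by simp
  qed
qed



definition W :: "nat \<Rightarrow> nat \<Rightarrow> real" where
  "W a b = Ip ([:0,1:]^a * [:1,-1:]^b)"

lemma W_R1: "W a b = W (Suc a) b + W a (Suc b)"
proof -
  have "([:0,1:]::real poly)^a * [:1,-1:]^b = [:0,1:]^(Suc a) * [:1,-1:]^b + [:0,1:]^a * [:1,-1:]^(Suc b)"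
    by (rule poly_ext) (simp add: algebra_simps)
  then show ?thesis unfolding W_def by (simp only: Ip_add)
qed

lemma alg_aux:
  fixes X Y s c :: real
  assumes "s^2 = 4 * X * Y" "c = Y - X"
  shows "c * X^a * Y^b + s * (real a * X^(a-1) * (s/2) * Y^b - X^a * (real b * Y^(b-1) * (s/2)))
     = (2 * real a + 1) * X^a * Y^(Suc b) - (2 * real b + 1) * X^(Suc a) * Y^b"
proof -
  have e1: "real a * X^(a-1) * X = real a * X^a"
    by (cases a) (simp, metis diff_Suc_1 mult.assoc power_Suc2)
  have e2: "real b * Y^(b-1) * Y = real b * Y^b"
    by (cases b) (simp, metis diff_Suc_1 mult.assoc power_Suc2)
  have "s * (real a * X^(a-1) * (s/2) * Y^b) = (s^2/2) * (real a * X^(a-1)) * Y^b"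
    by (simp add: power2_eq_square)
  also have "\<dots> = 2 * Y * (real a * X^(a-1) * X) * Y^b" using assms(1) by simp
  also have "\<dots> = 2 * Y * (real a * X^a) * Y^b" by (simp only: e1)
  also have "\<dots> = 2 * real a * X^a * Y^(Suc b)" by (simp add: algebra_simps)
  finally have t1: "s * (real a * X^(a-1) * (s/2) * Y^b) = 2 * real a * X^a * Y^(Suc b)" .
  have "s * (X^a * (real b * Y^(b-1) * (s/2))) = (s^2/2) * X^a * (real b * Y^(b-1))"
    by (simp add: power2_eq_square)
  also have "\<dots> = 2 * X * X^a * (real b * Y^(b-1) * Y)" using assms(1) by simp
  also have "\<dots> = 2 * X * X^a * (real b * Y^b)" by (simp only: e2)
  also have "\<dots> = 2 * real b * X^(Suc a) * Y^b" by (simp add: algebra_simps)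
  finally have t2: "s * (X^a * (real b * Y^(b-1) * (s/2))) = 2 * real b * X^(Suc a) * Y^b" .
  show ?thesis unfolding right_diff_distrib t1 t2 assms(2) by (simp add: algebra_simps)
qed

lemma W_R2: "(2 * real a + 1) * W a (Suc b) = (2 * real b + 1) * W (Suc a) b"
proof -
  define F where "F t = sin t * xt t ^ a * (1 - xt t) ^ b" for t
  define H where "H = smult (2 * real a + 1) ([:0,1:]^a * [:1,-1:]^(Suc b)) -
      smult (2 * real b + 1) ([:0,1:]^(Suc a) * [:1,-1:]^b)"
  have der: "(F has_real_derivative poly H (xt t)) (at t)" for t
  proof -
    define D where "D = cos t * xt t ^ a * (1 - xt t) ^ b + sin t * (real a * xt t ^ (a-1) * (sin t / 2) * (1 - xt t) ^ b
        - xt t ^ a * (real b * (1 - xt t) ^ (b-1) * (sin t / 2)))"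
    have d: "(F has_real_derivative D) (at t)"
      unfolding F_def xt_def D_def
      by (rule derivative_eq_intros refl | simp)+ (simp add: algebra_simps)
    have s2: "sin t ^ 2 = 4 * xt t * (1 - xt t)"
    proof -
      have "4 * xt t * (1 - xt t) = 1 - cos t ^ 2" unfolding xt_def by (simp add: field_simps power2_eq_square)
      then show ?thesis using sin_squared_eq[of t] by simp
    qed
    have c: "cos t = (1 - xt t) - xt t" unfolding xt_def by simp
    have e1: "D = (2 * real a + 1) * xt t ^ a * (1 - xt t) ^ (Suc b) - (2 * real b + 1) * xt t ^ (Suc a) * (1 - xt t) ^ b"
      unfolding D_def by (rule alg_aux[OF s2 c])
    have e2: "poly H (xt t) = (2 * real a + 1) * xt t ^ a * (1 - xt t) ^ (Suc b) - (2 * real b + 1) * xt t ^ (Suc a) * (1 - xt t) ^ b"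
      unfolding H_def by (simp add: algebra_simps)
    from d show ?thesis by (simp only: e1 e2[symmetric])
  qed
  have "((\<lambda>t. poly H (xt t)) has_integral (F pi - F 0)) {0..pi}"
    by (rule fundamental_theorem_of_calculus) (auto simp: has_real_derivative_iff_has_vector_derivative[symmetric] intro!:
        DERIV_subset[OF der])
  then have "integral {0..pi} (\<lambda>t. poly H (xt t)) = 0" unfolding F_def by (simp add: integral_unique)
  then have "Ip H = 0" unfolding Ip_def by simp
  moreover have "Ip H = (2 * real a + 1) * W a (Suc b) - (2 * real b + 1) * W (Suc a) b"
    unfolding H_def W_def by (simp only: Ip_diff Ip_smult)
  ultimately show ?thesis by simp
qed

lemma W_step_b: "W a (Suc b) = (2 * real b + 1) / (2 * real a + 2 * real b + 2) * W a b"
proof -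
  have "(2 * real b + 1) * W a b = (2 * real a + 1) * W a (Suc b) + (2 * real b + 1) * W a (Suc b)"
    using W_R1[of a b] W_R2[of a b] by (simp add: algebra_simps)
  then show ?thesis by (simp add: field_simps)
qed

lemma W_step_a: "W (Suc a) b = (2 * real a + 1) / (2 * real a + 2 * real b + 2) * W a b"
proof -
  have "(2 * real a + 1) * W a b = (2 * real a + 1) * W (Suc a) b + (2 * real b + 1) * W (Suc a) b"
    using W_R1[of a b] W_R2[of a b] by (simp add: algebra_simps)
  then show ?thesis by (simp add: field_simps)
qed

lemma Gamma_plus1_pos: "(x::real) > 0 \<Longrightarrow> Gamma (x + 1) = x * Gamma x"
  by (rule Gamma_plus1) (auto dest: nonpos_Ints_nonpos)

definition Wc :: "nat \<Rightarrow> nat \<Rightarrow> real" where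
  "Wc a b = Gamma (real a + 1/2) * Gamma (real b + 1/2) / (pi * Gamma (real a + real b + 1))"

lemma Wc_step_a: "Wc (Suc a) b = (2 * real a + 1) / (2 * real a + 2 * real b + 2) * Wc a b"
proof -
  have e1: "real (Suc a) + 1/2 = (real a + 1/2) + 1" by simp
  have e2: "real (Suc a) + real b + 1 = (real a + real b + 1) + 1" by simp
  have g1: "Gamma ((real a + 1/2) + 1) = (real a + 1/2) * Gamma (real a + 1/2)"
    by (rule Gamma_plus1_pos) simp
  have g2: "Gamma ((real a + real b + 1) + 1) = (real a + real b + 1) * Gamma (real a + real b + 1)"
    by (rule Gamma_plus1_pos) simp
  have gp: "Gamma (real a + real b + 1) > 0" by (intro Gamma_real_pos) simp
  show ?thesis unfolding Wc_def e1 e2 g1 g2 using gp by (simp add: field_simps)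
qed

lemma Wc_step_b: "Wc a (Suc b) = (2 * real b + 1) / (2 * real a + 2 * real b + 2) * Wc a b"
proof -
  have e1: "real (Suc b) + 1/2 = (real b + 1/2) + 1" by simp
  have e2: "real a + real (Suc b) + 1 = (real a + real b + 1) + 1" by simp
  have g1: "Gamma ((real b + 1/2) + 1) = (real b + 1/2) * Gamma (real b + 1/2)"
    by (rule Gamma_plus1_pos) simp
  have g2: "Gamma ((real a + real b + 1) + 1) = (real a + real b + 1) * Gamma (real a + real b + 1)"
    by (rule Gamma_plus1_pos) simp
  have gp: "Gamma (real a + real b + 1) > 0" by (intro Gamma_real_pos) simp
  show ?thesis unfolding Wc_def e1 e2 g1 g2 using gp by (simp add: field_simps)
qed

lemma W_closed: "W a b = Wc a b"
proof (induction b)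
  case 0
  show ?case
  proof (induction a)
    case 0
    have "W 0 0 = 1" unfolding W_def by (simp add: Ip_1)
    moreover have "Wc 0 0 = 1" unfolding Wc_def using Gamma_one_half_real by simp
    ultimately show ?case by simp
  next
    case (Suc a)
    then show ?case using W_step_a[of a 0] Wc_step_a[of a 0] by simp
  qed
next
  case (Suc b)
  then show ?case using W_step_b[of a b] Wc_step_b[of a b] by simp
qed

lemma W_pos: "W a b > 0"
  unfolding W_closed Wc_def by (intro divide_pos_pos mult_pos_pos Gamma_real_pos) auto

definition bpoly :: "nat \<Rightarrow> nat \<Rightarrow> real poly" where
  "bpoly n y = smult (real (n choose y)) ([:0,1:]^y * [:1,-1:]^(n-y))"

lemma poly_bpoly: "poly (bpoly n y) x = real (n choose y) * x ^ y * (1 - x) ^ (n - y)"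
  unfolding bpoly_def by simp

lemma Ip_bpoly: "Ip (bpoly n y) = real (n choose y) * W y (n - y)"
  unfolding bpoly_def W_def by (simp add: Ip_smult)

lemma ref_out_eq: assumes "y \<le> n" shows "ref_out n y = Ip (bpoly n y)"
proof -
  have nn: "real n - real y = real (n - y)" using assms by simp
  have f1: "Gamma (real y + 1) = fact y" using Gamma_fact[of y] by (simp add: add_ac)
  have f2: "Gamma (real (n - y) + 1) = fact (n - y)" using Gamma_fact[of "n-y"] by (simp add: add_ac)
  have f3: "Gamma (real y + real (n - y) + 1) = fact n"
    using Gamma_fact[of n] assms by (simp add: add_ac flip: of_nat_add)
  have c: "real (n choose y) = fact n / (fact y * fact (n - y))"
    using binomial_fact[OF assms] by simp
  show ?thesis unfolding Ip_bpoly W_closed Wc_def ref_out_def nn f1 f2 f3 c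
    by (simp add: field_simps)
qed

lemma ref_out_pos: assumes "y \<le> n" shows "ref_out n y > 0"
  unfolding ref_out_eq[OF assms] Ip_bpoly using W_pos assms by simp

definition rr :: "nat \<Rightarrow> nat \<Rightarrow> nat \<Rightarrow> real" where
  "rr n j y = (\<Prod>i<j. (real y + real i + 1/2) / (real n + real i + 1))"

lemma W_ratio: assumes "y \<le> n" shows "W (y + j) (n - y) = rr n j y * W y (n - y)"
proof (induction j)
  case 0 then show ?case by (simp add: rr_def)
next
  case (Suc j)
  have "W (y + Suc j) (n - y) = (2 * real (y + j) + 1) / (2 * real (y + j) + 2 * real (n - y) + 2) * W (y + j) (n - y)"
    using W_step_a[of "y + j" "n - y"] by simp
  also have "(2 * real (y + j) + 1) / (2 * real (y + j) + 2 * real (n - y) + 2) = (real y + real j + 1/2) / (real n + real j + 1)"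
    using assms by (simp add: of_nat_diff field_simps)
  finally show ?case using Suc by (simp add: rr_def)
qed

lemma Ip_monom_bpoly: assumes "y \<le> n"
  shows "Ip (monom 1 j * bpoly n y) = rr n j y * Ip (bpoly n y)"
proof -
  have "monom 1 j * bpoly n y = smult (real (n choose y)) ([:0,1:]^(y+j) * [:1,-1:]^(n-y))"
    unfolding bpoly_def by (rule poly_ext) (simp add: poly_monom power_add)
  then show ?thesis using W_ratio[OF assms, of j] unfolding Ip_bpoly
    by (simp add: Ip_smult W_def[symmetric])
qed



fun cheb :: "nat \<Rightarrow> real poly" where
  "cheb 0 = 1"
| "cheb (Suc 0) = [:1, -2:]"
| "cheb (Suc (Suc k)) = smult 2 ([:1, -2:] * cheb (Suc k)) - cheb k"

lemma cheb_cos: "poly (cheb k) (xt t) = cos (real k * t)"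
proof (induction k rule: cheb.induct)
  case 1 then show ?case by simp
next
  case 2 then show ?case by (simp add: xt_def field_simps)
next
  case (3 k)
  have "cos (real (Suc (Suc k)) * t) + cos (real k * t) = 2 * cos t * cos (real (Suc k) * t)"
  proof -
    have a: "real (Suc (Suc k)) * t = real (Suc k) * t + t" by (simp add: algebra_simps)
    have b: "real k * t = real (Suc k) * t - t" by (simp add: algebra_simps)
    show ?thesis unfolding a b cos_add cos_diff by simp
  qed
  moreover have "poly (cheb (Suc (Suc k))) (xt t) = 2 * (1 - 2 * xt t) * poly (cheb (Suc k)) (xt t) - poly (cheb k) (xt t)"
    by (simp add: algebra_simps)
  moreover have "1 - 2 * xt t = cos t" by (simp add: xt_def field_simps)
  ultimately show ?case using 3 by simp
qed

lemma cheb_deg: "degree (cheb k) \<le> k"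
proof (induction k rule: cheb.induct)
  case (3 k)
  have "degree (smult 2 ([:1, -2:] * cheb (Suc k))) \<le> Suc (Suc k)"
    by (rule order.trans[OF degree_smult_le]) (rule order.trans[OF degree_mult_le], use 3 in simp)
  moreover have "degree (cheb k) \<le> Suc (Suc k)" using 3 by simp
  ultimately show ?case by (simp add: degree_diff_le)
qed auto

lemma cheb_lead: "coeff (cheb k) k = (if k = 0 then 1 else (-4)^k / 2)"
proof (induction k rule: cheb.induct)
  case (3 k)
  have z: "coeff (cheb k) (Suc (Suc k)) = 0" using cheb_deg[of k] by (simp add: coeff_eq_0)
  have z2: "coeff (cheb (Suc k)) (Suc (Suc k)) = 0" using cheb_deg[of "Suc k"] by (simp add: coeff_eq_0)
  have "coeff (cheb (Suc (Suc k))) (Suc (Suc k)) = - 4 * coeff (cheb (Suc k)) (Suc k)"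
    using z z2 by (simp add: mult_pCons_left)
  then show ?case using 3 by simp
qed auto

lemma cheb_lead_nz: "coeff (cheb k) k \<noteq> 0"
  by (simp add: cheb_lead)

lemma int_cos: "((\<lambda>t. cos (real_of_int m * t)) has_integral (if m = 0 then pi else 0)) {0..pi}"
proof (cases "m = 0")
  case True then show ?thesis using has_integral_const_real[of "1::real" 0 pi] by (simp add: real_scaleR_def)
next
  case False
  define F where "F t = sin (real_of_int m * t) / real_of_int m" for t
  have "((\<lambda>t. cos (real_of_int m * t)) has_integral (F pi - F 0)) {0..pi}"
  proof (rule fundamental_theorem_of_calculus)
    fix t :: real
    have "(F has_real_derivative cos (real_of_int m * t)) (at t)"
      unfolding F_def using False by (auto intro!: derivative_eq_intros)
    then show "(F has_vector_derivative cos (real_of_int m * t)) (at t within {0..pi})"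
      by (simp add: has_real_derivative_iff_has_vector_derivative[symmetric] has_field_derivative_at_within)
  qed simp
  moreover have "F pi - F 0 = 0" unfolding F_def by (simp add: mult.commute)
  ultimately show ?thesis using False by simp
qed

lemma cos_prod: "cos (real j * t) * cos (real k * t) =
   (cos (real_of_int (int j - int k) * t) + cos (real_of_int (int j + int k) * t)) / 2"
proof -
  have a: "real_of_int (int j - int k) * t = real j * t - real k * t" by (simp add: algebra_simps)
  have b: "real_of_int (int j + int k) * t = real j * t + real k * t" by (simp add: algebra_simps)
  show ?thesis unfolding a b cos_add cos_diff by simp
qed

lemma Ip_cheb: "Ip (cheb j * cheb k) = (if j = k then (if k = 0 then 1 else 1/2) else 0)"
proof -
  have "((\<lambda>t. poly (cheb j * cheb k) (xt t)) has_integral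
      ((if int j - int k = 0 then pi else 0) + (if int j + int k = 0 then pi else 0)) / 2) {0..pi}"
    unfolding poly_mult cheb_cos cos_prod
    by (intro has_integral_divide has_integral_add int_cos)
  then have "integral {0..pi} (\<lambda>t. poly (cheb j * cheb k) (xt t)) =
      ((if int j - int k = 0 then pi else 0) + (if int j + int k = 0 then pi else 0)) / 2"
    by (rule integral_unique)
  then show ?thesis unfolding Ip_def by auto
qed

lemma cheb_bound: assumes "0 \<le> x" "x \<le> 1" shows "\<bar>poly (cheb k) x\<bar> \<le> 1"
proof -
  have "xt (arccos (1 - 2 * x)) = x" unfolding xt_def using assms by (simp add: cos_arccos)
  then have "poly (cheb k) x = cos (real k * arccos (1 - 2 * x))"
    using cheb_cos[of k "arccos (1 - 2 * x)"] by simp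
  then show ?thesis by simp
qed

lemma cheb_span: "degree u \<le> k \<Longrightarrow> \<exists>a. u = (\<Sum>j\<le>k. smult (a j) (cheb j))"
proof (induction k arbitrary: u)
  case 0
  then have "u = [:coeff u 0:]" by (metis degree_0_id le_zero_eq)
  then have "u = smult (coeff u 0) (cheb 0)" by simp
  then show ?case by auto
next
  case (Suc k)
  define c where "c = coeff u (Suc k) / coeff (cheb (Suc k)) (Suc k)"
  define u' where "u' = u - smult c (cheb (Suc k))"
  have "degree u' \<le> k"
  proof (rule degree_le, intro allI impI)
    fix i assume "k < i"
    show "coeff u' i = 0"
    proof (cases "i = Suc k")
      case True then show ?thesis unfolding u'_def c_def using cheb_lead_nz[of "Suc k"] by simp
    next
      case False
      then have "Suc k < i" using \<open>k < i\<close> by simp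
      then show ?thesis unfolding u'_def using Suc.prems cheb_deg[of "Suc k"] by (simp add: coeff_eq_0)
    qed
  qed
  then obtain a where a: "u' = (\<Sum>j\<le>k. smult (a j) (cheb j))" using Suc.IH by blast
  define a' where "a' = a(Suc k := c)"
  have "(\<Sum>j\<le>Suc k. smult (a' j) (cheb j)) = (\<Sum>j\<le>k. smult (a j) (cheb j)) + smult c (cheb (Suc k))"
    unfolding a'_def by (simp add: sum.atMost_Suc)
  also have "\<dots> = u" unfolding a[symmetric] u'_def by simp
  finally show ?case by metis
qed

lemma cheb_orth: assumes "degree v < k" shows "Ip (cheb k * v) = 0"
proof -
  obtain k' where k: "k = Suc k'" using assms by (cases k) auto
  obtain a where a: "v = (\<Sum>j\<le>k'. smult (a j) (cheb j))" using cheb_span[of v k'] assms k by auto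
  have "Ip (cheb k * v) = (\<Sum>j\<le>k'. a j * Ip (cheb k * cheb j))"
    unfolding a by (simp add: sum_distrib_left Ip_sum Ip_smult)
  also have "\<dots> = 0" using k by (simp add: Ip_cheb)
  finally show ?thesis .
qed



definition Bop :: "nat \<Rightarrow> (nat \<Rightarrow> real) \<Rightarrow> real poly" where
  "Bop n h = (\<Sum>y\<le>n. smult (h y) (bpoly n y))"

lemma poly_Bop: "poly (Bop n h) x = (\<Sum>y\<le>n. h y * (real (n choose y) * x ^ y * (1 - x) ^ (n - y)))"
  unfolding Bop_def by (simp add: poly_sum poly_bpoly)

lemma Bop_cong: "(\<And>y. y \<le> n \<Longrightarrow> f y = g y) \<Longrightarrow> Bop n f = Bop n g"
  unfolding Bop_def by (rule sum.cong) auto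

lemma Bop_add: "Bop n (\<lambda>y. f y + g y) = Bop n f + Bop n g"
  unfolding Bop_def by (simp add: smult_add_left sum.distrib)

lemma Bop_const: "Bop n (\<lambda>y. c) = [:c:]"
proof (rule poly_ext)
  fix x :: real
  have "(\<Sum>y\<le>n. real (n choose y) * x ^ y * (1 - x) ^ (n - y)) = (x + (1 - x)) ^ n"
    by (rule binomial_ring[symmetric])
  then have "(\<Sum>y\<le>n. c * (real (n choose y) * x ^ y * (1 - x) ^ (n - y))) = c"
    by (simp add: sum_distrib_left[symmetric] mult.assoc)
  then show "poly (Bop n (\<lambda>y. c)) x = poly [:c:] x" unfolding poly_Bop by simp
qed

lemma Bop_shift: "Bop (Suc n) (\<lambda>y. real y * h y) = smult (real (Suc n)) (pCons 0 (Bop n (\<lambda>y. h (Suc y))))"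
proof (rule poly_ext)
  fix x :: real
  have "poly (Bop (Suc n) (\<lambda>y. real y * h y)) x =
      (\<Sum>y\<le>n. real (Suc y) * h (Suc y) * (real (Suc n choose Suc y) * x ^ Suc y * (1 - x) ^ (Suc n - Suc y)))"
    unfolding poly_Bop by (subst sum.atMost_Suc_shift) simp
  also have "\<dots> = (\<Sum>y\<le>n. real (Suc n) * x * (h (Suc y) * (real (n choose y) * x ^ y * (1 - x) ^ (n - y))))"
  proof (rule sum.cong[OF refl])
    fix y
    have nat_id: "Suc y * (Suc n choose Suc y) = Suc n * (n choose y)"
      using Suc_times_binomial_eq[of n y] by (simp only: mult.commute)
    have AB: "real (Suc y) * real (Suc n choose Suc y) = real (Suc n) * real (n choose y)"
      by (simp only: of_nat_mult[symmetric] nat_id)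
    have "real (Suc y) * h (Suc y) * (real (Suc n choose Suc y) * x ^ Suc y * (1 - x) ^ (Suc n - Suc y)) =
        (real (Suc y) * real (Suc n choose Suc y)) * (h (Suc y) * x * x ^ y * (1 - x) ^ (n - y))"
      by (simp only: power_Suc diff_Suc_Suc mult_ac)
    also have "\<dots> = (real (Suc n) * real (n choose y)) * (h (Suc y) * x * x ^ y * (1 - x) ^ (n - y))"
      by (simp only: AB)
    also have "\<dots> = real (Suc n) * x * (h (Suc y) * (real (n choose y) * x ^ y * (1 - x) ^ (n - y)))"
      by (simp only: mult_ac)
    finally show "real (Suc y) * h (Suc y) * (real (Suc n choose Suc y) * x ^ Suc y * (1 - x) ^ (Suc n - Suc y)) =
        real (Suc n) * x * (h (Suc y) * (real (n choose y) * x ^ y * (1 - x) ^ (n - y)))" .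
  qed
  also have "\<dots> = poly (smult (real (Suc n)) (pCons 0 (Bop n (\<lambda>y. h (Suc y))))) x"
    unfolding poly_smult poly_pCons poly_Bop by (simp add: sum_distrib_left mult.assoc)
  finally show "poly (Bop (Suc n) (\<lambda>y. real y * h y)) x = poly (smult (real (Suc n)) (pCons 0 (Bop n (\<lambda>y. h (Suc y))))) x" .
qed

definition ffr :: "nat \<Rightarrow> nat \<Rightarrow> real" where
  "ffr n k = (\<Prod>i<k. real n - real i)"

lemma Bop_poly:
  "degree q \<le> k \<Longrightarrow> degree (Bop n (\<lambda>y. poly q (real y))) \<le> k \<and>
     coeff (Bop n (\<lambda>y. poly q (real y))) k = ffr n k * coeff q k"
proof (induction k arbitrary: n q)
  case 0
  then obtain c where q: "q = [:c:]" by (metis degree_0_id le_zero_eq)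
  show ?case unfolding q by (simp add: Bop_const ffr_def)
next
  case (Suc k)
  obtain c q1 where q: "q = pCons c q1" by (cases q)
  have dq1: "degree q1 \<le> k" using Suc.prems q by (cases "q1 = 0") auto
  have split: "Bop n (\<lambda>y. poly q (real y)) = [:c:] + Bop n (\<lambda>y. real y * poly q1 (real y))"
    unfolding q by (simp add: Bop_add Bop_const)
  note IHo = Suc.IH
  show ?case
  proof (cases n)
    case 0
    have "Bop 0 (\<lambda>y. real y * poly q1 (real y)) = 0" unfolding Bop_def by simp
    moreover have "ffr 0 (Suc k) = 0" unfolding ffr_def by (auto simp add: prod.lessThan_Suc_shift)
    ultimately show ?thesis using split 0 by simp
  next
    case nS: (Suc n')
    define q2 where "q2 = pcompose q1 [:1, 1:]"
    have pq2: "poly q1 (real (Suc y)) = poly q2 (real y)" for y unfolding q2_def by (simp add: poly_pcompose)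
    have dq2: "degree q2 = degree q1" unfolding q2_def by (simp add: degree_pcompose)
    have cq2: "coeff q2 k = coeff q1 k"
    proof (cases "degree q1 = k")
      case True
      have "lead_coeff q2 = lead_coeff q1" unfolding q2_def using lead_coeff_comp[of "[:1, 1:]" q1] by simp
      then show ?thesis using True dq2 by simp
    next
      case False
      then have "degree q1 < k" using dq1 by simp
      then show ?thesis using dq2 by (simp add: coeff_eq_0)
    qed
    have IH: "degree (Bop n' (\<lambda>y. poly q2 (real y))) \<le> k \<and>
      coeff (Bop n' (\<lambda>y. poly q2 (real y))) k = ffr n' k * coeff q2 k"
      using IHo[of q2 n'] dq1 dq2 by simp
    have e: "Bop n (\<lambda>y. real y * poly q1 (real y)) = smult (real n) (pCons 0 (Bop n' (\<lambda>y. poly q2 (real y))))"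
      unfolding nS Bop_shift pq2 by simp
    have ff: "ffr n (Suc k) = real n * ffr n' k"
      unfolding ffr_def nS by (subst prod.lessThan_Suc_shift) simp
    show ?thesis
    proof
      let ?B = "Bop n' (\<lambda>y. poly q2 (real y))"
      have "degree (pCons 0 ?B) \<le> Suc k" using IH degree_pCons_le[of 0 ?B] by linarith
      then have "degree (smult (real n) (pCons 0 ?B)) \<le> Suc k" using degree_smult_le order.trans by blast
      moreover have "degree [:c:] \<le> Suc k" by simp
      ultimately show "degree (Bop n (\<lambda>y. poly q (real y))) \<le> Suc k"
        unfolding split e by (rule degree_add_le[rotated])
      show "coeff (Bop n (\<lambda>y. poly q (real y))) (Suc k) = ffr n (Suc k) * coeff q (Suc k)"
        unfolding split e ff using IH cq2 q by simp
    qed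
  qed
qed

definition Sop :: "nat \<Rightarrow> real poly \<Rightarrow> real poly" where
  "Sop n u = Bop n (\<lambda>y. Ip (u * bpoly n y) / Ip (bpoly n y))"

lemma Sop_add: "Sop n (u + v) = Sop n u + Sop n v"
  unfolding Sop_def by (simp add: distrib_right Ip_add add_divide_distrib Bop_add)

lemma Bop_smult: "Bop n (\<lambda>y. c * f y) = smult c (Bop n f)"
  by (rule poly_ext) (simp add: poly_Bop sum_distrib_left mult_ac)

lemma Sop_smult: "Sop n (smult c u) = smult c (Sop n u)"
  unfolding Sop_def by (simp add: Ip_smult Bop_smult[symmetric])

lemma Sop_0: "Sop n 0 = 0"
  using Sop_smult[of n 0 0] by simp

lemma Sop_sum: "Sop n (\<Sum>i\<in>A. f i) = (\<Sum>i\<in>A. Sop n (f i))"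
  by (induction A rule: infinite_finite_induct) (auto simp: Sop_add Sop_0)

lemma Sop_diff: "Sop n (u - v) = Sop n u - Sop n v"
  using Sop_add[of n "u - v" v] by simp

definition Rp :: "nat \<Rightarrow> nat \<Rightarrow> real poly" where
  "Rp n j = smult (1 / (\<Prod>i<j. real n + real i + 1)) (\<Prod>i<j. [:real i + 1/2, 1:])"

lemma prod_lin: "degree (\<Prod>i<j. [:f i, 1:] :: real poly) \<le> j \<and> coeff (\<Prod>i<j. [:f i, 1:] :: real poly) j = 1"
proof (induction j)
  case 0 then show ?case by simp
next
  case (Suc j)
  let ?P = "\<Prod>i<j. [:f i, 1:] :: real poly"
  have z: "coeff ?P (Suc j) = 0" using Suc by (simp add: coeff_eq_0)
  have e: "(\<Prod>i<Suc j. [:f i, 1:]) = smult (f j) ?P + pCons 0 ?P"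
    by (simp add: prod.lessThan_Suc mult.commute[of ?P])
  show ?case unfolding e using Suc z
    by (auto intro!: order.trans[OF degree_add_le_max] order.trans[OF degree_smult_le] simp: degree_pCons_eq_if)
qed

lemma poly_Rp: "poly (Rp n j) (real y) = rr n j y"
  unfolding Rp_def rr_def by (simp add: poly_prod prod_dividef add_ac)

lemma Rp_deg: "degree (Rp n j) \<le> j" unfolding Rp_def using prod_lin[of "\<lambda>i. real i + 1/2" j]
  by (metis degree_smult_le order.trans)

lemma Rp_lead: "coeff (Rp n j) j = 1 / (\<Prod>i<j. real n + real i + 1)"
  unfolding Rp_def using prod_lin[of "\<lambda>i. real i + 1/2" j] by simp

definition lam :: "nat \<Rightarrow> nat \<Rightarrow> real" where
  "lam n k = ffr n k / (\<Prod>i<k. real n + real i + 1)"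

lemma Sop_monom: "Sop n (monom 1 j) = Bop n (\<lambda>y. poly (Rp n j) (real y))"
  unfolding Sop_def poly_Rp
proof (rule Bop_cong)
  fix y assume "y \<le> n"
  then show "Ip (monom 1 j * bpoly n y) / Ip (bpoly n y) = rr n j y"
    using Ip_monom_bpoly[of y n j] ref_out_pos[of y n] ref_out_eq[of y n] by simp
qed

lemma Sop_monom_deg: "degree (Sop n (monom 1 j)) \<le> j \<and> coeff (Sop n (monom 1 j)) j = lam n j"
  unfolding Sop_monom lam_def using Bop_poly[of "Rp n j" j n] Rp_deg[of n j] Rp_lead[of n j] by simp

lemma KEY: assumes "degree u \<le> k"
  shows "degree (Sop n u) \<le> k \<and> coeff (Sop n u) k = lam n k * coeff u k"
proof -
  have u: "u = (\<Sum>j\<le>k. smult (coeff u j) (monom 1 j))"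
    using poly_as_sum_of_monoms'[OF assms] by (simp add: smult_monom)
  have S: "Sop n u = (\<Sum>j\<le>k. smult (coeff u j) (Sop n (monom 1 j)))"
    by (subst u) (simp add: Sop_sum Sop_smult)
  have dj: "degree (Sop n (monom 1 j)) \<le> k" if "j \<le> k" for j
    using Sop_monom_deg[of n j] that by simp
  have "degree (Sop n u) \<le> k" unfolding S
  proof (rule degree_sum_le)
    fix j assume "j \<in> {..k}"
    then show "degree (smult (coeff u j) (Sop n (monom 1 j))) \<le> k"
      using degree_smult_le dj order.trans by fastforce
  qed simp
  moreover have "coeff (Sop n u) k = lam n k * coeff u k"
  proof -
    have "coeff (Sop n u) k = (\<Sum>j\<le>k. coeff u j * coeff (Sop n (monom 1 j)) k)"
      unfolding S by (simp add: coeff_sum)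
    also have "\<dots> = (\<Sum>j\<in>{k}. coeff u j * coeff (Sop n (monom 1 j)) k)"
    proof (rule sum.mono_neutral_right)
      show "\<forall>j\<in>{..k} - {k}. coeff u j * coeff (Sop n (monom 1 j)) k = 0"
      proof
        fix j assume "j \<in> {..k} - {k}"
        then have "j < k" by auto
        then have "coeff (Sop n (monom 1 j)) k = 0" using Sop_monom_deg[of n j] by (simp add: coeff_eq_0)
        then show "coeff u j * coeff (Sop n (monom 1 j)) k = 0" by simp
      qed
    qed auto
    also have "\<dots> = lam n k * coeff u k" using Sop_monom_deg[of n k] by simp
    finally show ?thesis .
  qed
  ultimately show ?thesis by simp
qed



lemma Ip_Sop_form: "Ip (Sop n u * v) = (\<Sum>y\<le>n. Ip (u * bpoly n y) * Ip (v * bpoly n y) / Ip (bpoly n y))"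
proof -
  have "Sop n u * v = (\<Sum>y\<le>n. smult (Ip (u * bpoly n y) / Ip (bpoly n y)) (bpoly n y * v))"
    unfolding Sop_def Bop_def by (simp add: sum_distrib_right)
  then show ?thesis by (simp add: Ip_sum Ip_smult mult.commute)
qed

lemma Sop_selfadj: "Ip (Sop n u * v) = Ip (u * Sop n v)"
proof -
  have "Ip (u * Sop n v) = Ip (Sop n v * u)" by (simp add: mult.commute)
  then show ?thesis unfolding Ip_Sop_form by (simp add: mult_ac)
qed

lemma lam_Suc: "lam n (Suc k) = lam n k * ((real n - real k) / (real n + real k + 1))"
  unfolding lam_def ffr_def by (simp add: prod.lessThan_Suc field_simps)

lemma lam_pos: "k \<le> n \<Longrightarrow> lam n k > 0"
proof (induction k)
  case 0 then show ?case by (simp add: lam_def ffr_def)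
next
  case (Suc k)
  then show ?case unfolding lam_Suc by (intro mult_pos_pos divide_pos_pos) auto
qed

lemma lam_mono: "k \<le> m \<Longrightarrow> m \<le> n \<Longrightarrow> lam n m \<le> lam n k"
proof (induction m)
  case 0 then show ?case by simp
next
  case (Suc m)
  have p: "lam n m > 0" using Suc.prems lam_pos by simp
  have f: "(real n - real m) / (real n + real m + 1) \<le> 1" by (simp add: divide_le_eq_1)
  have "lam n (Suc m) \<le> lam n m" unfolding lam_Suc using p f
    by (metis mult.right_neutral mult_left_mono less_imp_le)
  then show ?case
  proof (cases "k = Suc m")
    case False
    then have "k \<le> m" using Suc.prems by simp
    then show ?thesis using Suc.IH Suc.prems \<open>lam n (Suc m) \<le> lam n m\<close> by simp
  qed simp
qed

lemma ortho_aux: assumes "degree D \<le> k" "coeff D k = 0" shows "Ip (cheb k * D) = 0"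
proof (cases "D = 0")
  case False
  then have "degree D \<noteq> k" using assms(2) by auto
  then have "degree D < k" using assms(1) by simp
  then show ?thesis by (rule cheb_orth)
qed simp

lemma Sop_cheb: "Ip (Sop n (cheb j) * cheb k) = (if j = k then lam n k * Ip (cheb k * cheb k) else 0)"
proof -
  consider "j < k" | "k < j" | "j = k" by linarith
  then show ?thesis
  proof cases
    case 1
    have "degree (Sop n (cheb j)) < k" using KEY[OF cheb_deg[of j], of n] 1 by simp
    then show ?thesis using cheb_orth[of "Sop n (cheb j)" k] 1 by (simp add: mult.commute)
  next
    case 2
    have "degree (Sop n (cheb k)) < j" using KEY[OF cheb_deg[of k], of n] 2 by simp
    then show ?thesis using cheb_orth[of "Sop n (cheb k)" j] 2 Sop_selfadj[of n "cheb j" "cheb k"] by simp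
  next
    case 3
    define D where "D = Sop n (cheb k) - smult (lam n k) (cheb k)"
    have K: "degree (Sop n (cheb k)) \<le> k \<and> coeff (Sop n (cheb k)) k = lam n k * coeff (cheb k) k"
      by (rule KEY[OF cheb_deg])
    have "degree D \<le> k" unfolding D_def using K cheb_deg[of k]
      by (meson degree_diff_le degree_smult_le order.trans)
    moreover have "coeff D k = 0" unfolding D_def using K by simp
    ultimately have e2: "Ip (cheb k * D) = 0" by (rule ortho_aux)
    have eqS: "Sop n (cheb k) = smult (lam n k) (cheb k) + D" unfolding D_def by simp
    have e: "Sop n (cheb k) * cheb k = smult (lam n k) (cheb k * cheb k) + cheb k * D" "Ip (cheb k * D) = 0"
      unfolding eqS using e2 by (simp_all add: algebra_simps)
    have "Ip (Sop n (cheb k) * cheb k) = lam n k * Ip (cheb k * cheb k) + Ip (cheb k * D)"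
      unfolding e(1) by (simp only: Ip_add Ip_smult)
    then show ?thesis using 3 e(2) by simp
  qed
qed

lemma T3: assumes "degree u \<le> m" "m \<le> n"
  shows "lam n m * Ip (u * u) \<le> Ip (Sop n u * u)"
proof -
  obtain a where a: "u = (\<Sum>j\<le>m. smult (a j) (cheb j))" using cheb_span[OF assms(1)] by blast
  define I where "I k = Ip (cheb k * cheb k)" for k
  have I0: "I k \<ge> 0" for k unfolding I_def by (rule Ip_sq_nonneg)
  have "Ip (Sop n u * u) = (\<Sum>j\<le>m. \<Sum>k\<le>m. a j * a k * Ip (Sop n (cheb j) * cheb k))"
    unfolding a by (simp add: Sop_sum Sop_smult sum_distrib_left sum_distrib_right Ip_sum Ip_smult mult_ac)
  also have "\<dots> = (\<Sum>j\<le>m. a j * a j * (lam n j * I j))"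
    unfolding Sop_cheb I_def by (simp add: if_distrib cong: if_cong)
  finally have L: "Ip (Sop n u * u) = (\<Sum>j\<le>m. a j * a j * (lam n j * I j))" .
  have "Ip (u * u) = (\<Sum>j\<le>m. \<Sum>k\<le>m. a j * a k * Ip (cheb j * cheb k))"
    unfolding a by (simp add: sum_distrib_left sum_distrib_right Ip_sum Ip_smult mult_ac)
  also have "\<dots> = (\<Sum>j\<le>m. a j * a j * I j)"
  proof -
    have c: "Ip (cheb j * cheb k) = (if j = k then I k else 0)" for j k
      unfolding I_def by (simp add: Ip_cheb)
    show ?thesis unfolding c by (simp add: if_distrib cong: if_cong)
  qed
  finally have R: "Ip (u * u) = (\<Sum>j\<le>m. a j * a j * I j)" .
  have "lam n m * Ip (u * u) = (\<Sum>j\<le>m. a j * a j * (lam n m * I j))"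
    unfolding R by (simp add: sum_distrib_left mult_ac)
  also have "\<dots> \<le> (\<Sum>j\<le>m. a j * a j * (lam n j * I j))"
  proof (rule sum_mono)
    fix j assume "j \<in> {..m}"
    then have "lam n m \<le> lam n j" using lam_mono assms(2) by simp
    then have "lam n m * I j \<le> lam n j * I j" using I0 by (simp add: mult_right_mono)
    then show "a j * a j * (lam n m * I j) \<le> a j * a j * (lam n j * I j)"
      by (simp add: mult_left_mono)
  qed
  finally show ?thesis using L by simp
qed

lemma T2: "degree G \<le> k \<Longrightarrow> k \<le> n \<Longrightarrow> \<exists>u. degree u \<le> k \<and> Sop n u = G"
proof (induction k arbitrary: G)
  case 0
  then have G: "G = [:coeff G 0:]" by (metis degree_0_id le_zero_eq)
  have K: "degree (Sop n G) \<le> 0 \<and> coeff (Sop n G) 0 = lam n 0 * coeff G 0" using KEY[of G 0 n] 0 by simp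
  then have "Sop n G = [:coeff G 0:]" by (metis degree_0_id le_zero_eq lam_def ffr_def lessThan_0 prod.empty div_by_1 mult_1)
  then show ?case using G 0 by metis
next
  case (Suc k)
  have lp: "lam n (Suc k) \<noteq> 0" using lam_pos[of "Suc k" n] Suc.prems by simp
  define u0 where "u0 = monom (coeff G (Suc k) / lam n (Suc k)) (Suc k)"
  have du0: "degree u0 \<le> Suc k" unfolding u0_def by (simp add: degree_monom_le)
  have K: "degree (Sop n u0) \<le> Suc k \<and> coeff (Sop n u0) (Suc k) = lam n (Suc k) * coeff u0 (Suc k)"
    by (rule KEY[OF du0])
  have "degree (G - Sop n u0) \<le> k"
  proof (rule degree_le, intro allI impI)
    fix i assume "k < i"
    show "coeff (G - Sop n u0) i = 0"
    proof (cases "i = Suc k")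
      case True then show ?thesis using K lp unfolding u0_def by simp
    next
      case False
      then have "Suc k < i" using \<open>k < i\<close> by simp
      then show ?thesis using K Suc.prems by (simp add: coeff_eq_0)
    qed
  qed
  then obtain u1 where u1: "degree u1 \<le> k" "Sop n u1 = G - Sop n u0" using Suc.IH Suc.prems by force
  have "Sop n (u0 + u1) = G" using u1 by (simp add: Sop_add)
  moreover have "degree (u0 + u1) \<le> Suc k" using du0 u1(1) by (simp add: degree_add_le)
  ultimately show ?case by blast
qed

lemma spectral: assumes "degree G \<le> m" "m \<le> n"
  shows "\<exists>u. Sop n u = G \<and> lam n m * Ip (u * G) \<le> Ip (G * G)"
proof -
  obtain u where u: "degree u \<le> m" "Sop n u = G" using T2[OF assms] by blast
  define a where "a = Ip (u * G)"
  have a_eq: "a = Ip (Sop n u * u)" unfolding a_def u(2)[symmetric] by (simp add: mult.commute)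
  have lp: "lam n m > 0" using lam_pos assms(2) by simp
  have low: "lam n m * Ip (u * u) \<le> a" unfolding a_eq by (rule T3[OF u(1) assms(2)])
  have uu: "Ip (u * u) \<ge> 0" by (rule Ip_sq_nonneg)
  have "0 \<le> lam n m * Ip (u * u)" using mult_nonneg_nonneg[OF less_imp_le[OF lp] uu] .
  then have a0: "a \<ge> 0" using low by linarith
  have cs: "a^2 \<le> Ip (u * u) * Ip (G * G)" unfolding a_def by (rule Ip_CS)
  have GG: "Ip (G * G) \<ge> 0" by (rule Ip_sq_nonneg)
  have "lam n m * a^2 \<le> lam n m * Ip (u * u) * Ip (G * G)" using cs lp by (simp add: mult.assoc)
  also have "\<dots> \<le> a * Ip (G * G)" using low GG by (simp add: mult_right_mono)
  finally have "lam n m * a * a \<le> Ip (G * G) * a" by (simp add: power2_eq_square mult_ac)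
  then have "lam n m * a \<le> Ip (G * G)"
  proof (cases "a = 0")
    case True then show ?thesis using GG by simp
  next
    case False
    then have "a > 0" using a0 by simp
    then show ?thesis using \<open>lam n m * a * a \<le> Ip (G * G) * a\<close> by simp
  qed
  then show ?thesis using u(2) unfolding a_def by blast
qed



definition kinv :: "nat \<Rightarrow> real set \<Rightarrow> (real \<Rightarrow> real poly) \<Rightarrow> real poly \<Rightarrow> bool" where
  "kinv L A Kp g \<longleftrightarrow> (\<forall>x. degree (Kp x) \<le> L - 1) \<and> (\<forall>x y. poly (Kp x) y = poly (Kp y) x) \<and>
     (\<forall>x y. Ip (Kp x * Kp y) = poly (Kp x) y) \<and> (\<forall>a\<in>A. Kp a = 0) \<and>
     degree g \<le> 2 * (L - 1) \<and> (\<forall>x. poly g x = poly (Kp x) x) \<and>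
     Ip g \<ge> real L - real (card A) \<and> (\<forall>x. 0 \<le> x \<longrightarrow> x \<le> 1 \<longrightarrow> poly g x \<le> 2 * real L - 1)"

definition wt :: "nat \<Rightarrow> real" where "wt k = (if k = 0 then 1 else 2)"

lemma wt_I: "wt k * Ip (cheb k * cheb k) = 1"
  unfolding wt_def by (simp add: Ip_cheb)

lemma kinv_base: assumes "L \<ge> 1"
  shows "kinv L {} (\<lambda>x. \<Sum>k<L. smult (wt k * poly (cheb k) x) (cheb k)) (\<Sum>k<L. smult (wt k) (cheb k * cheb k))"
proof -
  define Kp where "Kp x = (\<Sum>k<L. smult (wt k * poly (cheb k) x) (cheb k))" for x
  define g where "g = (\<Sum>k<L. smult (wt k) (cheb k * cheb k))"
  have pK: "poly (Kp x) y = (\<Sum>k<L. wt k * poly (cheb k) x * poly (cheb k) y)" for x y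
    unfolding Kp_def by (simp add: poly_sum)
  have d1: "degree (Kp x) \<le> L - 1" for x
    unfolding Kp_def
  proof (rule degree_sum_le)
    fix k assume "k \<in> {..<L}"
    then have "degree (cheb k) \<le> L - 1" using cheb_deg[of k] by simp
    then show "degree (smult (wt k * poly (cheb k) x) (cheb k)) \<le> L - 1"
      using degree_smult_le order.trans by blast
  qed simp
  have sym: "poly (Kp x) y = poly (Kp y) x" for x y unfolding pK by (simp add: mult_ac)
  have rep: "Ip (Kp x * Kp y) = poly (Kp x) y" for x y
  proof -
    have "Ip (Kp x * Kp y) = (\<Sum>j<L. \<Sum>k<L. wt j * (wt k * (poly (cheb j) y * (poly (cheb k) x * Ip (cheb j * cheb k)))))"
      unfolding Kp_def by (simp add: sum_distrib_left sum_distrib_right Ip_sum Ip_smult mult_ac)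
    also have "\<dots> = (\<Sum>j<L. wt j * poly (cheb j) x * poly (cheb j) y * (wt j * Ip (cheb j * cheb j)))"
    proof -
      have c: "Ip (cheb j * cheb k) = (if j = k then Ip (cheb k * cheb k) else 0)" for j k
        by (simp add: Ip_cheb)
      show ?thesis by (subst c) (simp add: if_distrib mult_ac cong: if_cong)
    qed
    also have "\<dots> = poly (Kp x) y" unfolding pK wt_I by simp
    finally show ?thesis .
  qed
  have dg: "degree g \<le> 2 * (L - 1)"
    unfolding g_def
  proof (rule degree_sum_le)
    fix k assume "k \<in> {..<L}"
    then have "degree (cheb k * cheb k) \<le> 2 * (L - 1)"
      using cheb_deg[of k] degree_mult_le[of "cheb k" "cheb k"] by simp
    then show "degree (smult (wt k) (cheb k * cheb k)) \<le> 2 * (L - 1)"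
      using degree_smult_le order.trans by blast
  qed simp
  have pg: "poly g x = poly (Kp x) x" for x unfolding g_def pK by (simp add: poly_sum mult_ac)
  have tr: "Ip g = real L" unfolding g_def by (simp add: Ip_sum Ip_smult wt_I)
  have bd: "poly g x \<le> 2 * real L - 1" if "0 \<le> x" "x \<le> 1" for x
  proof -
    have "poly g x = (\<Sum>k<L. wt k * (poly (cheb k) x)^2)" unfolding g_def by (simp add: poly_sum power2_eq_square)
    also have "\<dots> \<le> (\<Sum>k<L. wt k)"
    proof (rule sum_mono)
      fix k
      have "\<bar>poly (cheb k) x\<bar> \<le> 1" using cheb_bound that by simp
      then have "(poly (cheb k) x)^2 \<le> 1" by (simp add: abs_square_le_1)
      then show "wt k * (poly (cheb k) x)^2 \<le> wt k" unfolding wt_def by simp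
    qed
    also have "(\<Sum>k<L. wt k) = 2 * real L - 1"
      using assms
    proof (induction L)
      case (Suc L) then show ?case by (cases "L = 0") (auto simp: wt_def)
    qed simp
    finally show ?thesis .
  qed
  show ?thesis unfolding kinv_def Kp_def[symmetric] g_def[symmetric]
    using d1 sym rep dg pg tr bd by simp
qed

lemma kinv_step: assumes "kinv L A Kp g" "finite A" "a \<notin> A"
  shows "\<exists>Kp' g'. kinv L (insert a A) Kp' g'"
proof -
  note K = assms(1)[unfolded kinv_def]
  have deg: "\<And>x. degree (Kp x) \<le> L - 1" and sym: "\<And>x y. poly (Kp x) y = poly (Kp y) x"
    and rep: "\<And>x y. Ip (Kp x * Kp y) = poly (Kp x) y" and kil: "\<And>b. b \<in> A \<Longrightarrow> Kp b = 0"
    and dg: "degree g \<le> 2 * (L - 1)" and pg: "\<And>x. poly g x = poly (Kp x) x"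
    and tr: "Ip g \<ge> real L - real (card A)"
    and bd: "\<And>x. 0 \<le> x \<Longrightarrow> x \<le> 1 \<Longrightarrow> poly g x \<le> 2 * real L - 1"
    using K by auto
  have cardi: "real (card (insert a A)) = real (card A) + 1" using assms(2,3) by simp
  define c where "c = poly (Kp a) a"
  have c0: "c \<ge> 0" unfolding c_def rep[symmetric] by (rule Ip_sq_nonneg)
  show ?thesis
  proof (cases "c = 0")
    case True
    have "poly (Kp a) y = 0" for y
    proof -
      have "(poly (Kp y) a)^2 \<le> Ip (Kp y * Kp y) * Ip (Kp a * Kp a)"
        unfolding rep[symmetric] by (rule Ip_CS)
      also have "\<dots> = 0" unfolding rep using True c_def by simp
      finally have "poly (Kp y) a = 0" by simp
      then show ?thesis using sym by simp
    qed
    then have "Kp a = 0" by (intro poly_ext) simp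
    then have "kinv L (insert a A) Kp g" unfolding kinv_def using deg sym rep kil dg pg tr bd cardi by auto
    then show ?thesis by blast
  next
    case False
    then have cp: "c > 0" using c0 by simp
    define Kp' where "Kp' x = Kp x - smult (poly (Kp x) a / c) (Kp a)" for x
    define g' where "g' = g - smult (1 / c) (Kp a * Kp a)"
    have pK': "poly (Kp' x) y = poly (Kp x) y - poly (Kp x) a * poly (Kp a) y / c" for x y
      unfolding Kp'_def by simp
    have deg': "degree (Kp' x) \<le> L - 1" for x
    proof -
      have "degree (smult (poly (Kp x) a / c) (Kp a)) \<le> L - 1" using deg degree_smult_le order.trans by blast
      then show ?thesis unfolding Kp'_def using deg degree_diff_le by blast
    qed
    have sym': "poly (Kp' x) y = poly (Kp' y) x" for x y
      unfolding pK' using sym by (metis mult.commute)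
    have rep': "Ip (Kp' x * Kp' y) = poly (Kp' x) y" for x y
    proof -
      define s t where "s = poly (Kp x) a / c" and "t = poly (Kp y) a / c"
      have "Kp' x * Kp' y = Kp x * Kp y - smult t (Kp x * Kp a) - smult s (Kp a * Kp y) + smult (s * t) (Kp a * Kp a)"
        unfolding Kp'_def s_def[symmetric] t_def[symmetric] by (simp add: algebra_simps)
      then have "Ip (Kp' x * Kp' y) = Ip (Kp x * Kp y) - t * Ip (Kp x * Kp a) - s * Ip (Kp a * Kp y) + s * t * Ip (Kp a * Kp a)"
        by (simp add: Ip_add Ip_diff Ip_smult)
      also have "\<dots> = poly (Kp x) y - t * poly (Kp x) a - s * poly (Kp a) y + s * t * c"
        unfolding rep c_def by simp
      also have "\<dots> = poly (Kp x) y - poly (Kp x) a * poly (Kp a) y / c"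
        unfolding s_def t_def using cp sym[of y a] sym[of x a] by (simp add: field_simps)
      finally show ?thesis unfolding pK' .
    qed
    have kil': "Kp' b = 0" if "b \<in> insert a A" for b
    proof (cases "b = a")
      case True
      then show ?thesis unfolding Kp'_def using cp c_def by simp
    next
      case False
      then have "b \<in> A" using that by simp
      then show ?thesis unfolding Kp'_def using kil by simp
    qed
    have dg': "degree g' \<le> 2 * (L - 1)"
    proof -
      have "degree (Kp a * Kp a) \<le> 2 * (L - 1)" using deg[of a] degree_mult_le[of "Kp a" "Kp a"] by simp
      then have "degree (smult (1 / c) (Kp a * Kp a)) \<le> 2 * (L - 1)" using degree_smult_le order.trans by blast
      then show ?thesis unfolding g'_def using dg degree_diff_le by blast
    qed
    have pg': "poly g' x = poly (Kp' x) x" for x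
      unfolding g'_def pK' using pg[of x] sym[of x a] by simp
    have tr': "Ip g' \<ge> real L - real (card (insert a A))"
    proof -
      have "Ip g' = Ip g - Ip (Kp a * Kp a) / c" unfolding g'_def by (simp add: Ip_diff Ip_smult)
      also have "Ip (Kp a * Kp a) = c" unfolding rep c_def ..
      finally have "Ip g' = Ip g - 1" using cp by simp
      then show ?thesis using tr cardi by simp
    qed
    have bd': "poly g' x \<le> 2 * real L - 1" if "0 \<le> x" "x \<le> 1" for x
    proof -
      have "0 \<le> poly (Kp a) x * poly (Kp a) x / c" using cp by simp
      then have "poly g' x \<le> poly g x" unfolding g'_def by simp
      then show ?thesis using bd[OF that] by simp
    qed
    have "kinv L (insert a A) Kp' g'" unfolding kinv_def
      using deg' sym' rep' kil' dg' pg' tr' bd' by blast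
    then show ?thesis by blast
  qed
qed

lemma kinv_exists: assumes "finite A" "L \<ge> 1" shows "\<exists>Kp g. kinv L A Kp g"
  using assms(1)
proof (induction A rule: finite_induct)
  case empty
  then show ?case using kinv_base[OF assms(2)] by blast
next
  case (insert a A)
  then obtain Kp g where "kinv L A Kp g" by blast
  then show ?case using kinv_step insert.hyps by blast
qed

lemma G_exists: assumes "finite A" "L \<ge> 1"
  shows "\<exists>G. degree G \<le> 2 * (L - 1) \<and> (\<forall>a\<in>A. poly G a = 0) \<and>
     (\<forall>x. 0 \<le> x \<longrightarrow> x \<le> 1 \<longrightarrow> 0 \<le> poly G x \<and> poly G x \<le> 2 * real L - 1) \<and>
     Ip G \<ge> real L - real (card A)"
proof -
  obtain Kp g where K: "kinv L A Kp g" using kinv_exists[OF assms] by blast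
  have pg: "poly g x = poly (Kp x) x" for x using K unfolding kinv_def by blast
  have rep: "Ip (Kp x * Kp y) = poly (Kp x) y" for x y using K unfolding kinv_def by blast
  have nn: "0 \<le> poly g x" for x unfolding pg rep[symmetric] by (rule Ip_sq_nonneg)
  have z: "poly g a = 0" if "a \<in> A" for a using K that unfolding kinv_def pg by auto
  show ?thesis using K nn z unfolding kinv_def by blast
qed



lemma lam_B: assumes "m \<le> n"
  shows "lam n m * (\<Prod>j=1..m. (real n + real j) / (real n - real j + 1)) = 1"
proof -
  have e1: "(\<Prod>j=1..m. (real n + real j) / (real n - real j + 1)) = (\<Prod>i<m. (real n + real i + 1) / (real n - real i))"
  proof -
    have e: "{1..m} = {Suc 0..m}" by simp
    show ?thesis unfolding e prod.atLeast1_atMost_eq by (simp add: add_ac)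
  qed
  have e2: "lam n m = (\<Prod>i<m. (real n - real i) / (real n + real i + 1))"
    unfolding lam_def ffr_def by (simp add: prod_dividef)
  have "lam n m * (\<Prod>j=1..m. (real n + real j) / (real n - real j + 1)) =
      (\<Prod>i<m. (real n - real i) / (real n + real i + 1)) * (\<Prod>i<m. (real n + real i + 1) / (real n - real i))"
    unfolding e1 e2 ..
  also have "\<dots> = (\<Prod>i<m. (real n - real i) / (real n + real i + 1) * ((real n + real i + 1) / (real n - real i)))"
    by (rule prod.distrib[symmetric])
  also have "\<dots> = (\<Prod>i<m. 1)"
  proof (rule prod.cong[OF refl])
    fix i assume "i \<in> {..<m}"
    then have "real n - real i > 0" using assms by simp
    moreover have "real n + real i + 1 > 0" by simp
    ultimately show "(real n - real i) / (real n + real i + 1) * ((real n + real i + 1) / (real n - real i)) = 1"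
      by simp
  qed
  finally show ?thesis by simp
qed

lemma chi2_CS:
  fixes P Q f :: "nat \<Rightarrow> real"
  assumes "\<And>y. y \<le> n \<Longrightarrow> Q y > 0"
  shows "(\<Sum>y\<le>n. f y * (P y - Q y))^2 \<le> chi2 n P Q * (\<Sum>y\<le>n. (f y)^2 * Q y)"
proof -
  have "(\<Sum>y\<le>n. f y * (P y - Q y))^2 = (\<Sum>y\<le>n. (f y * sqrt (Q y)) * ((P y - Q y) / sqrt (Q y)))^2"
  proof -
    have "(\<Sum>y\<le>n. f y * (P y - Q y)) = (\<Sum>y\<le>n. (f y * sqrt (Q y)) * ((P y - Q y) / sqrt (Q y)))"
    proof (rule sum.cong[OF refl])
      fix y assume "y \<in> {..n}"
      then have "sqrt (Q y) > 0" using assms by simp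
      then show "f y * (P y - Q y) = f y * sqrt (Q y) * ((P y - Q y) / sqrt (Q y))" by simp
    qed
    then show ?thesis by simp
  qed
  also have "\<dots> \<le> (\<Sum>y\<le>n. (f y * sqrt (Q y))^2) * (\<Sum>y\<le>n. ((P y - Q y) / sqrt (Q y))^2)"
    by (rule Cauchy_Schwarz_ineq_sum)
  also have "(\<Sum>y\<le>n. (f y * sqrt (Q y))^2) = (\<Sum>y\<le>n. (f y)^2 * Q y)"
    by (rule sum.cong[OF refl]) (use assms in \<open>simp add: power_mult_distrib less_imp_le\<close>)
  also have "(\<Sum>y\<le>n. ((P y - Q y) / sqrt (Q y))^2) = chi2 n P Q"
    unfolding chi2_def
    by (rule sum.cong[OF refl]) (use assms in \<open>simp add: power_divide less_imp_le\<close>)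
  finally show ?thesis by (simp add: mult.commute)
qed

lemma chi2_nonneg: assumes "\<And>y. y \<le> n \<Longrightarrow> Q y > 0" shows "chi2 n P Q \<ge> 0"
  unfolding chi2_def by (rule sum_nonneg) (use assms in \<open>simp add: less_imp_le\<close>)

theorem theorem5:
  fixes n K L :: nat and p :: "real pmf"
  assumes "n \<ge> 1"
    and "finite (set_pmf p)"
    and "set_pmf p \<subseteq> {0..1}"
    and "card (set_pmf p) = K"
    and "K < L"
    and "real L \<le> (real n + 2) / 2"
  shows "chi2 n (binom_out n p) (ref_out n) \<ge> B_bound n K L"
proof -
  define A where "A = set_pmf p"
  define m where "m = 2 * L - 2"
  have L1: "L \<ge> 1" using assms(5) by simp
  have mn: "m \<le> n" unfolding m_def using assms(6) by simp
  have m2: "2 * (L - 1) = m" unfolding m_def by simp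
  obtain G where G: "degree G \<le> m" "\<forall>a\<in>A. poly G a = 0"
      "\<forall>x. 0 \<le> x \<longrightarrow> x \<le> 1 \<longrightarrow> 0 \<le> poly G x \<and> poly G x \<le> 2 * real L - 1"
      "Ip G \<ge> real L - real K"
    using G_exists[of A L] assms(2,4) L1 unfolding A_def m2 by blast
  obtain u where u: "Sop n u = G" "lam n m * Ip (u * G) \<le> Ip (G * G)"
    using spectral[OF G(1) mn] by blast
  define f where "f y = Ip (u * bpoly n y) / Ip (bpoly n y)" for y
  define P where "P = binom_out n p"
  define Q where "Q = ref_out n"
  have Qeq: "Q y = Ip (bpoly n y)" if "y \<le> n" for y unfolding Q_def using ref_out_eq[OF that] .
  have Qpos: "Q y > 0" if "y \<le> n" for y unfolding Q_def using ref_out_pos[OF that] .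
  have SopB: "Sop n u = Bop n f" unfolding Sop_def f_def ..
  have sP: "(\<Sum>y\<le>n. f y * P y) = 0"
  proof -
    have "(\<Sum>y\<le>n. f y * P y) = (\<Sum>x\<in>A. pmf p x * poly (Bop n f) x)"
      unfolding P_def binom_out_def A_def poly_Bop
      by (simp add: sum_distrib_left sum_distrib_right mult_ac sum.swap[of _ "{..n}"])
    also have "\<dots> = 0" using G(2) unfolding SopB[symmetric] u(1) by simp
    finally show ?thesis .
  qed
  have sQ: "(\<Sum>y\<le>n. f y * Q y) = Ip G"
  proof -
    have "(\<Sum>y\<le>n. f y * Q y) = (\<Sum>y\<le>n. f y * Ip (bpoly n y))" using Qeq by simp
    also have "\<dots> = Ip (Bop n f)" unfolding Bop_def by (simp add: Ip_sum Ip_smult)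
    finally show ?thesis unfolding SopB[symmetric] u(1) .
  qed
  have sQ2: "(\<Sum>y\<le>n. (f y)^2 * Q y) = Ip (u * G)"
  proof -
    have "(\<Sum>y\<le>n. (f y)^2 * Q y) = (\<Sum>y\<le>n. f y * Ip (u * bpoly n y))"
    proof (rule sum.cong[OF refl])
      fix y assume "y \<in> {..n}"
      then have "Ip (bpoly n y) > 0" using Qpos Qeq by fastforce
      then show "(f y)^2 * Q y = f y * Ip (u * bpoly n y)"
        using Qeq \<open>y \<in> {..n}\<close> unfolding f_def by (simp add: power2_eq_square)
    qed
    also have "\<dots> = Ip (u * Bop n f)" unfolding Bop_def
      by (simp add: Ip_sum Ip_smult sum_distrib_left mult.commute)
    finally show ?thesis unfolding SopB[symmetric] u(1) .
  qed
  define X where "X = chi2 n P Q"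
  have X0: "X \<ge> 0" unfolding X_def by (rule chi2_nonneg) (rule Qpos)
  have cs: "(Ip G)^2 \<le> X * Ip (u * G)"
  proof -
    have "(\<Sum>y\<le>n. f y * (P y - Q y))^2 \<le> X * (\<Sum>y\<le>n. (f y)^2 * Q y)"
      unfolding X_def by (rule chi2_CS) (rule Qpos)
    moreover have "(\<Sum>y\<le>n. f y * (P y - Q y)) = - Ip G"
      using sP sQ by (simp add: right_diff_distrib sum_subtractf)
    ultimately show ?thesis unfolding sQ2 by simp
  qed
  have lp: "lam n m > 0" using lam_pos mn by simp
  have GG: "Ip (G * G) \<le> (2 * real L - 1) * Ip G"
  proof -
    have "Ip (G * G) \<le> Ip (smult (2 * real L - 1) G)"
    proof (rule Ip_mono)
      fix x :: real assume "0 \<le> x" "x \<le> 1"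
      then have "0 \<le> poly G x" "poly G x \<le> 2 * real L - 1" using G(3) by auto
      then show "poly (G * G) x \<le> poly (smult (2 * real L - 1) G) x"
        by (simp add: mult_right_mono)
    qed
    then show ?thesis by (simp add: Ip_smult)
  qed
  have IG: "Ip G > 0" using G(4) assms(5) by simp
  have "lam n m * (Ip G)^2 \<le> X * (lam n m * Ip (u * G))"
    using cs lp by (simp add: mult_left_mono mult.left_commute)
  also have "\<dots> \<le> X * Ip (G * G)" using u(2) X0 by (simp add: mult_left_mono)
  also have "\<dots> \<le> X * ((2 * real L - 1) * Ip G)" using GG X0 by (simp add: mult_left_mono)
  finally have "(lam n m * Ip G) * Ip G \<le> (X * (2 * real L - 1)) * Ip G"
    by (simp add: power2_eq_square mult_ac)
  then have key: "lam n m * Ip G \<le> X * (2 * real L - 1)" using IG by simp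
  have "lam n m * (real L - real K) \<le> lam n m * Ip G" using G(4) lp by simp
  also note key
  finally have k2: "lam n m * (real L - real K) \<le> X * (2 * real L - 1)" .
  have LK: "real L - real K > 0" using assms(5) by simp
  have "lam n m * (real L - real K) / (2 * real L) \<le> X * (2 * real L - 1) / (2 * real L)"
    using k2 L1 by (simp add: divide_right_mono)
  also have "\<dots> \<le> X" using X0 L1 by (simp add: field_simps mult_left_mono)
  finally have fin: "lam n m * (real L - real K) / (2 * real L) \<le> X" .
  have "B_bound n K L = lam n m * (real L - real K) / (2 * real L)"
  proof -
    have pr: "(\<Prod>j=1..2 * L - 2. (real n + real j) / (real n - real j + 1)) = 1 / lam n m"
      using lam_B[OF mn] lp unfolding m_def by (simp add: field_simps)
    show ?thesis unfolding B_bound_def pr using lp by (simp add: field_simps)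
  qed
  then show ?thesis using fin unfolding X_def P_def Q_def by simp
qed

end
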